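(* Let $\kappa$ be a regular uncountable cardinal with $\kappa^{<\kappa}=\kappa$ and $\gamma^\omega<\kappa$ for all $\gamma<\kappa$, and let $I$ be the linear order described in the context. Then $I$ is $(\kappa,bs,bs)$-nice.
   Context: $I^0$: order $\kappa\times\mathbb Q$ lexicographically; $I^0$ is the set of $f:\omega\to\kappa\times\mathbb Q$, $f(n)=(f_1(n),f_2(n))$, with $\{n\mid f_1(n)\ne0\}$ finite, ordered by comparing at the least $n$ where they differ. Construct $I^0\subseteq I^1\subseteq\dots$ ($i<\kappa$): given $I^i$, for each $\nu\in I^i$ add a new element $\nu^{i+1}$ with $\nu^{i+1}<\nu$ and, for all $\tau\in I^i\setminus\{\nu\}$, $\tau<\nu^{i+1}$ iff $\tau<\nu$ (for distinct $\nu,\mu$, $\nu^{i+1}<\mu^{i+1}$ iff $\nu<\mu$); $I^{i+1}=I^i\cup\{\nu^{i+1}\mid\nu\in I^i\}$; unions at limits; $I=\bigcup_{i<\kappa}I^i$. Types: $tp_{bs}(a,B,A)$ is the set of atomic and negated atomic formulas (in $\{<\}$) with parameters in $B$ true of $a$. A $\kappa$-representation of $A$ is an increasing continuous sequence $\langle A_\alpha\mid\alpha<\kappa\rangle$ of subsets of size $<\kappa$ with union $A$. $tp_{bs}(a,B,A)$ $(bs,bs)$-splits over $D$ if there are $b_1,b_2\in B$ with $tp_{bs}(b_1,D,A)=tp_{bs}(b_2,D,A)$ but $tp_{bs}(a^\frown b_1,D,A)\ne tp_{bs}(a^\frown b_2,D,A)$. $Sp_{bs}(\mathbb A)$ is the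 set of limit $\delta<\kappa$ such that some $a\in A$ has $tp_{bs}(a,A_\delta,A)$ $(bs,bs)$-splitting over $A_\beta$ for all $\beta<\delta$. $A$ is $(\kappa,bs,bs)$-nice if $Sp_{bs}(\mathbb A)$ is non-stationary for a (equivalently every) $\kappa$-representation $\mathbb A$ of $A$. *)

theory Defs
  imports Complex_Main "HOL-Library.Cardinality"
begin

unbundle cardinal_syntax

section \<open>Ordinals below kappa, represented by a cardinal well-order r on a type 'k\<close>

definition ordlt :: "'k rel \<Rightarrow> 'k \<Rightarrow> 'k \<Rightarrow> bool" where
  "ordlt r a b \<longleftrightarrow> (a, b) \<in> r \<and> a \<noteq> b"

definition kzero :: "'k rel \<Rightarrow> 'k" where
  "kzero r = (THE z. \<forall>a. (z, a) \<in> r)"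

definition ksucc :: "'k rel \<Rightarrow> 'k \<Rightarrow> 'k" where
  "ksucc r i = (THE j. ordlt r i j \<and> (\<forall>k. ordlt r i k \<longrightarrow> (j, k) \<in> r))"

definition isLimit :: "'k rel \<Rightarrow> 'k \<Rightarrow> bool" where
  "isLimit r \<delta> \<longleftrightarrow> \<delta> \<noteq> kzero r \<and>
     (\<forall>\<beta>. ordlt r \<beta> \<delta> \<longrightarrow> (\<exists>\<gamma>. ordlt r \<beta> \<gamma> \<and> ordlt r \<gamma> \<delta>))"

definition club :: "'k rel \<Rightarrow> 'k set \<Rightarrow> bool" where
  "club r C \<longleftrightarrow> (\<forall>\<alpha>. \<exists>\<gamma>\<in>C. ordlt r \<alpha> \<gamma>) \<and>
     (\<forall>\<delta>. isLimit r \<delta> \<and> (\<forall>\<beta>. ordlt r \<beta> \<delta> \<longrightarrow> (\<exists>\<gamma>\<in>C. ordlt r \<beta> \<gamma> \<and> ordlt r \<gamma> \<delta>))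
           \<longrightarrow> \<delta> \<in> C)"

definition stationary :: "'k rel \<Rightarrow> 'k set \<Rightarrow> bool" where
  "stationary r S \<longleftrightarrow> (\<forall>C. club r C \<longrightarrow> S \<inter> C \<noteq> {})"

definition lex_kq :: "'k rel \<Rightarrow> 'k \<times> rat \<Rightarrow> 'k \<times> rat \<Rightarrow> bool" where
  "lex_kq r x y \<longleftrightarrow> ordlt r (fst x) (fst y) \<or> (fst x = fst y \<and> snd x < snd y)"

definition base_set :: "'k rel \<Rightarrow> (nat \<Rightarrow> 'k \<times> rat) set" where
  "base_set r = {f. finite {n. fst (f n) \<noteq> kzero r}}"

definition base_lt :: "'k rel \<Rightarrow> (nat \<Rightarrow> 'k \<times> rat) \<Rightarrow> (nat \<Rightarrow> 'k \<times> rat) \<Rightarrow> bool" where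
  "base_lt r f g \<longleftrightarrow> (\<exists>n. (\<forall>m<n. f m = g m) \<and> f n \<noteq> g n \<and> lex_kq r (f n) (g n))"

datatype 'a tm = Var nat | Par 'a
datatype 'a atom = Less "'a tm" "'a tm" | Equal "'a tm" "'a tm"
datatype 'a lit = Pos "'a atom" | Neg "'a atom"

fun tm_val :: "'a list \<Rightarrow> 'a tm \<Rightarrow> 'a" where
  "tm_val as (Var n) = as ! n"
| "tm_val as (Par p) = p"

fun tm_ok :: "nat \<Rightarrow> 'a set \<Rightarrow> 'a tm \<Rightarrow> bool" where
  "tm_ok k B (Var n) \<longleftrightarrow> n < k"
| "tm_ok k B (Par p) \<longleftrightarrow> p \<in> B"

fun atom_ok :: "nat \<Rightarrow> 'a set \<Rightarrow> 'a atom \<Rightarrow> bool" where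
  "atom_ok k B (Less t u) \<longleftrightarrow> tm_ok k B t \<and> tm_ok k B u"
| "atom_ok k B (Equal t u) \<longleftrightarrow> tm_ok k B t \<and> tm_ok k B u"

fun atom_holds :: "('a \<Rightarrow> 'a \<Rightarrow> bool) \<Rightarrow> 'a list \<Rightarrow> 'a atom \<Rightarrow> bool" where
  "atom_holds lt as (Less t u) \<longleftrightarrow> lt (tm_val as t) (tm_val as u)"
| "atom_holds lt as (Equal t u) \<longleftrightarrow> tm_val as t = tm_val as u"

definition tp_bs :: "('a \<Rightarrow> 'a \<Rightarrow> bool) \<Rightarrow> 'a list \<Rightarrow> 'a set \<Rightarrow> 'a lit set" where
  "tp_bs lt as B =
     {Pos \<phi> | \<phi>. atom_ok (length as) B \<phi> \<and> atom_holds lt as \<phi>} \<union>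
     {Neg \<phi> | \<phi>. atom_ok (length as) B \<phi> \<and> \<not> atom_holds lt as \<phi>}"

definition bs_splits :: "('a \<Rightarrow> 'a \<Rightarrow> bool) \<Rightarrow> 'a \<Rightarrow> 'a set \<Rightarrow> 'a set \<Rightarrow> bool" where
  "bs_splits lt a B D \<longleftrightarrow> (\<exists>b1\<in>B. \<exists>b2\<in>B.
      tp_bs lt [b1] D = tp_bs lt [b2] D \<and> tp_bs lt [a, b1] D \<noteq> tp_bs lt [a, b2] D)"

definition kappa_rep :: "'k rel \<Rightarrow> 'a set \<Rightarrow> ('k \<Rightarrow> 'a set) \<Rightarrow> bool" where
  "kappa_rep r A As \<longleftrightarrow>
     (\<forall>\<alpha> \<beta>. (\<alpha>, \<beta>) \<in> r \<longrightarrow> As \<alpha> \<subseteq> As \<beta>) \<and>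
     (\<forall>\<delta>. isLimit r \<delta> \<longrightarrow> As \<delta> = (\<Union>\<beta>\<in>{\<beta>. ordlt r \<beta> \<delta>}. As \<beta>)) \<and>
     (\<forall>\<alpha>. |As \<alpha>| <o r) \<and>
     (\<Union>\<alpha>. As \<alpha>) = A"

definition Sp_bs :: "'k rel \<Rightarrow> ('a \<Rightarrow> 'a \<Rightarrow> bool) \<Rightarrow> 'a set \<Rightarrow> ('k \<Rightarrow> 'a set) \<Rightarrow> 'k set" where
  "Sp_bs r lt A As = {\<delta>. isLimit r \<delta> \<and>
      (\<exists>a\<in>A. \<forall>\<beta>. ordlt r \<beta> \<delta> \<longrightarrow> bs_splits lt a (As \<delta>) (As \<beta>))}"

text \<open>(kappa,bs,bs)-nice: Sp_bs is non-stationary for every kappa-representation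
  (the paper notes "a" and "every" are equivalent; we use "every").\<close>
definition nice :: "'k rel \<Rightarrow> ('a \<Rightarrow> 'a \<Rightarrow> bool) \<Rightarrow> 'a set \<Rightarrow> bool" where
  "nice r lt A \<longleftrightarrow> (\<forall>As. kappa_rep r A As \<longrightarrow> \<not> stationary r (Sp_bs r lt A As))"

end

theory Submission
  imports Defs "HOL-Library.Countable"
begin


locale kord =
  fixes r :: "'k rel"
  assumes card: "card_order r"
    and regular: "regularCard r"
    and uncountable: "natLeq <o r"
begin

lemma Field_r[simp]: "Field r = UNIV" using card card_order_on_Card_order by blast
lemma CO: "Card_order r" using card card_order_on_Card_order by blast
lemma WO: "Well_order r" using CO card_order_on_well_order_on by blast
lemma refl_r[simp]: "(a,a) \<in> r"
  using WO unfolding well_order_on_def linear_order_on_def partial_order_on_def preorder_on_def refl_on_def by simp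
lemma total_r: "(a,b) \<in> r \<or> (b,a) \<in> r"
  using WO unfolding well_order_on_def linear_order_on_def total_on_def
  by (metis Field_r UNIV_I refl_r)
lemma antisym_r: "(a,b) \<in> r \<Longrightarrow> (b,a) \<in> r \<Longrightarrow> a = b"
  using WO unfolding well_order_on_def linear_order_on_def partial_order_on_def antisym_def by blast
lemma trans_r: "(a,b) \<in> r \<Longrightarrow> (b,c) \<in> r \<Longrightarrow> (a,c) \<in> r"
  using WO unfolding well_order_on_def linear_order_on_def partial_order_on_def preorder_on_def trans_def by blast

lemma lt_irrefl[simp]: "\<not> ordlt r a a" by (simp add: ordlt_def)
lemma lt_trans: "ordlt r a b \<Longrightarrow> ordlt r b c \<Longrightarrow> ordlt r a c"
  unfolding ordlt_def using trans_r antisym_r by blast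
lemma le_lt_trans: "(a,b) \<in> r \<Longrightarrow> ordlt r b c \<Longrightarrow> ordlt r a c"
  unfolding ordlt_def using trans_r antisym_r by blast
lemma lt_le_trans: "ordlt r a b \<Longrightarrow> (b,c) \<in> r \<Longrightarrow> ordlt r a c"
  unfolding ordlt_def using trans_r antisym_r by blast
lemma lt_imp_le: "ordlt r a b \<Longrightarrow> (a,b) \<in> r" by (simp add: ordlt_def)
lemma not_lt: "(\<not> ordlt r a b) = ((b,a) \<in> r)"
  unfolding ordlt_def using total_r antisym_r refl_r by blast
lemma trich: "ordlt r a b \<or> a = b \<or> ordlt r b a"
  unfolding ordlt_def using total_r by blast
lemma lt_asym: "ordlt r a b \<Longrightarrow> \<not> ordlt r b a"
  using not_lt lt_imp_le by blast

lemma wf_lt: "wf {(a,b). ordlt r a b}"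
proof -
  have "wf (r - Id)" using WO wo_rel.WF wo_rel_def by blast
  moreover have "{(a,b). ordlt r a b} = r - Id" unfolding ordlt_def by auto
  ultimately show ?thesis by simp
qed

lemma lt_induct[case_names less]:
  assumes "\<And>x. (\<And>y. ordlt r y x \<Longrightarrow> P y) \<Longrightarrow> P x" shows "P a"
  using wf_lt by (induct a rule: wf_induct_rule) (auto intro: assms)

lemma infinite_UNIV_k: "infinite (UNIV :: 'k set)"
proof
  assume "finite (UNIV :: 'k set)"
  hence "finite (Field r)" by simp
  hence "\<not> natLeq \<le>o |Field r|" using infinite_iff_natLeq_ordLeq by blast
  moreover have "r =o |Field r|" using card card_of_Field_ordIso ordIso_symmetric
    card_order_on_Card_order by blast
  ultimately show False using uncountable
    by (meson ordIso_iff_ordLeq ordLeq_transitive ordLess_imp_ordLeq)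
qed

lemma Cinf: "Cinfinite r"
  using infinite_UNIV_k card card_order_on_Card_order unfolding cinfinite_def by simp

lemma bounded: assumes "|K| <o r" shows "\<exists>b. \<forall>k\<in>K. (k,b) \<in> r"
proof (rule ccontr)
  assume "\<not> ?thesis"
  hence "cofinal K r" unfolding cofinal_def
    by (metis not_lt ordlt_def)
  hence "|K| =o r" using regular unfolding regularCard_def by simp
  thus False using assms not_ordLess_ordIso by blast
qed

lemma unbounded: "\<exists>b. ordlt r a b"
proof (rule ccontr)
  assume "\<not> ?thesis"
  hence "\<forall>b. (b,a) \<in> r" using not_lt by blast
  hence "Field r = under r a" unfolding under_def by auto
  thus False using Card_order_infinite_not_under card infinite_UNIV_k
    card_order_on_Card_order by fastforce
qed

lemma sbounded: assumes "|K| <o r" shows "\<exists>b. \<forall>k\<in>K. ordlt r k b"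
proof -
  obtain b where "\<forall>k\<in>K. (k,b) \<in> r" using bounded assms by blast
  moreover obtain c where "ordlt r b c" using unbounded by blast
  ultimately show ?thesis using le_lt_trans by blast
qed

lemma finite_small: "finite K \<Longrightarrow> |K| <o r"
  using finite_ordLess_infinite[OF card_of_Well_order WO] infinite_UNIV_k Field_card_of Field_r by metis


lemma exists_min: assumes "x \<in> S" shows "\<exists>z\<in>S. \<forall>y\<in>S. (z, y) \<in> r"
proof -
  obtain z where z: "z \<in> S" "\<And>y. (y, z) \<in> {(a,b). ordlt r a b} \<Longrightarrow> y \<notin> S"
    using wfE_min[OF wf_lt assms] by metis
  have "\<forall>y\<in>S. (z, y) \<in> r"
  proof
    fix y assume "y \<in> S"
    hence "\<not> ordlt r y z" using z(2) by blast
    thus "(z, y) \<in> r" using not_lt by blast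
  qed
  thus ?thesis using z(1) by blast
qed

lemma kzero_le: "(kzero r, a) \<in> r"
proof -
  obtain z where z: "\<forall>a. (z,a) \<in> r"
    using exists_min[of undefined UNIV] by blast
  have "kzero r = z" unfolding kzero_def
  proof (rule the_equality)
    show "\<forall>a. (z, a) \<in> r" by (rule z)
    fix y assume "\<forall>a. (y, a) \<in> r"
    thus "y = z" using z antisym_r by blast
  qed
  thus ?thesis using z by simp
qed

lemma ksucc_ex: "\<exists>z. ordlt r i z \<and> (\<forall>k. ordlt r i k \<longrightarrow> (z,k) \<in> r)"
proof -
  obtain b where b: "ordlt r i b" using unbounded by blast
  then obtain z where "z \<in> {k. ordlt r i k}" "\<forall>y\<in>{k. ordlt r i k}. (z, y) \<in> r"
    using exists_min[of b "{k. ordlt r i k}"] by blast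
  thus ?thesis by blast
qed

lemma ksucc: "ordlt r i (ksucc r i)" "ordlt r i k \<Longrightarrow> (ksucc r i, k) \<in> r"
proof -
  obtain z where z2: "ordlt r i z" "\<forall>k. ordlt r i k \<longrightarrow> (z,k) \<in> r" using ksucc_ex by blast
  have "ksucc r i = z" unfolding ksucc_def
  proof (rule the_equality)
    show "ordlt r i z \<and> (\<forall>k. ordlt r i k \<longrightarrow> (z,k) \<in> r)" using z2 by blast
    fix y assume "ordlt r i y \<and> (\<forall>k. ordlt r i k \<longrightarrow> (y,k) \<in> r)"
    thus "y = z" using z2 antisym_r by blast
  qed
  thus "ordlt r i (ksucc r i)" "ordlt r i k \<Longrightarrow> (ksucc r i, k) \<in> r" using z2 by auto
qed

lemma ksucc_le: "ordlt r j i \<Longrightarrow> (ksucc r j, i) \<in> r" using ksucc by blast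
lemma lt_ksucc: "ordlt r i (ksucc r j) \<Longrightarrow> (i, j) \<in> r"
  using ksucc(2)[of j i] not_lt ksucc(1) lt_le_trans by blast

lemma zero_lt: "i \<noteq> kzero r \<Longrightarrow> ordlt r (kzero r) i"
  using kzero_le ordlt_def by metis

lemma limit_succ: "isLimit r d \<Longrightarrow> ordlt r b d \<Longrightarrow> ordlt r (ksucc r b) d"
  unfolding isLimit_def using ksucc le_lt_trans by blast

lemma zero_limit: "isLimit r d \<Longrightarrow> ordlt r (kzero r) d"
  unfolding isLimit_def using zero_lt by blast

lemma ord_cases: "i = kzero r \<or> (\<exists>j. ordlt r j i \<and> i = ksucc r j) \<or> isLimit r i"
proof (cases "i = kzero r \<or> isLimit r i")
  case False
  then obtain b where b: "ordlt r b i" "\<not> (\<exists>c. ordlt r b c \<and> ordlt r c i)"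
    unfolding isLimit_def by blast
  have 1: "(ksucc r b, i) \<in> r" using ksucc_le b(1) .
  have "\<not> ordlt r (ksucc r b) i" using b(2) ksucc(1)[of b] by blast
  hence "(i, ksucc r b) \<in> r" using not_lt by blast
  hence "ksucc r b = i" using 1 antisym_r by blast
  thus ?thesis using b by blast
qed blast

lemma kinduct[case_names zero succ limit]:
  assumes "P (kzero r)" "\<And>j. P j \<Longrightarrow> P (ksucc r j)"
    "\<And>d. isLimit r d \<Longrightarrow> (\<And>i. ordlt r i d \<Longrightarrow> P i) \<Longrightarrow> P d"
  shows "P i"
proof (induct i rule: lt_induct)
  case (less x)
  then show ?case using ord_cases[of x] assms by blast
qed

lemma finite_bound_limit: assumes "finite K" "isLimit r d" "\<forall>k\<in>K. ordlt r k d"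
  shows "\<exists>b. ordlt r b d \<and> (\<forall>k\<in>K. ordlt r k b)"
  using assms
proof (induct K rule: finite_induct)
  case empty then show ?case using zero_limit by blast
next
  case (insert x F)
  then obtain b where b: "ordlt r b d" "\<forall>k\<in>F. ordlt r k b" by auto
  define m where "m = (if ordlt r b x then x else b)"
  have "ordlt r m d" using b insert by (simp add: m_def)
  then obtain c where "ordlt r m c" "ordlt r c d" using insert(4) unfolding isLimit_def by blast
  moreover have "(x, m) \<in> r" "(b, m) \<in> r" unfolding m_def using not_lt lt_imp_le refl_r by auto
  ultimately have "ordlt r x c" "ordlt r b c" using le_lt_trans by blast+
  hence "\<forall>k\<in>insert x F. ordlt r k c" using b(2) lt_trans by blast
  thus ?case using \<open>ordlt r c d\<close> by blast
qed

end


lemma tp_eq_iff: assumes "length as = n" "length bs = n"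
  shows "tp_bs lt as X = tp_bs lt bs X \<longleftrightarrow>
    (\<forall>\<phi>. atom_ok n X \<phi> \<longrightarrow> atom_holds lt as \<phi> = atom_holds lt bs \<phi>)"
proof
  assume e: "tp_bs lt as X = tp_bs lt bs X"
  show "\<forall>\<phi>. atom_ok n X \<phi> \<longrightarrow> atom_holds lt as \<phi> = atom_holds lt bs \<phi>"
  proof (intro allI impI)
    fix \<phi> assume ok: "atom_ok n X \<phi>"
    have "Pos \<phi> \<in> tp_bs lt as X \<longleftrightarrow> atom_holds lt as \<phi>" using ok assms by (auto simp: tp_bs_def)
    moreover have "Pos \<phi> \<in> tp_bs lt bs X \<longleftrightarrow> atom_holds lt bs \<phi>" using ok assms by (auto simp: tp_bs_def)
    ultimately show "atom_holds lt as \<phi> = atom_holds lt bs \<phi>" using e by simp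
  qed
next
  assume h: "\<forall>\<phi>. atom_ok n X \<phi> \<longrightarrow> atom_holds lt as \<phi> = atom_holds lt bs \<phi>"
  show "tp_bs lt as X = tp_bs lt bs X" unfolding tp_bs_def using h assms by auto
qed

lemma tm_ok1: "tm_ok 1 X t \<Longrightarrow> t = Var 0 \<or> (\<exists>p\<in>X. t = Par p)"
  by (cases t) auto
lemma tm_ok2: "tm_ok 2 X t \<Longrightarrow> t = Var 0 \<or> t = Var 1 \<or> (\<exists>p\<in>X. t = Par p)"
  by (cases t) auto

definition sametp :: "('a \<Rightarrow> 'a \<Rightarrow> bool) \<Rightarrow> 'a \<Rightarrow> 'a \<Rightarrow> 'a set \<Rightarrow> bool" where
  "sametp lt b1 b2 X \<longleftrightarrow> (\<forall>c\<in>X. (lt b1 c \<longleftrightarrow> lt b2 c) \<and> (lt c b1 \<longleftrightarrow> lt c b2) \<and> (b1 = c \<longleftrightarrow> b2 = c))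
     \<and> (lt b1 b1 \<longleftrightarrow> lt b2 b2)"

lemma sametp_rules: assumes "sametp lt b1 b2 X"
  shows "c \<in> X \<Longrightarrow> lt b1 c = lt b2 c" "c \<in> X \<Longrightarrow> lt c b1 = lt c b2"
    "c \<in> X \<Longrightarrow> (b1 = c) = (b2 = c)" "c \<in> X \<Longrightarrow> (c = b1) = (c = b2)" "lt b1 b1 = lt b2 b2"
proof -
  have H: "\<forall>c\<in>X. (lt b1 c \<longleftrightarrow> lt b2 c) \<and> (lt c b1 \<longleftrightarrow> lt c b2) \<and> (b1 = c \<longleftrightarrow> b2 = c)"
    and H2: "lt b1 b1 \<longleftrightarrow> lt b2 b2" using assms unfolding sametp_def by auto
  show "c \<in> X \<Longrightarrow> lt b1 c = lt b2 c" using H by auto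
  show "c \<in> X \<Longrightarrow> lt c b1 = lt c b2" using H by auto
  show "c \<in> X \<Longrightarrow> (b1 = c) = (b2 = c)" using bspec[OF H] by auto
  show "c \<in> X \<Longrightarrow> (c = b1) = (c = b2)" using bspec[OF H] by auto
  show "lt b1 b1 = lt b2 b2" using H2 .
qed

lemma tp1_char: "tp_bs lt [b1] X = tp_bs lt [b2] X \<longleftrightarrow> sametp lt b1 b2 X"
proof -
  have "tp_bs lt [b1] X = tp_bs lt [b2] X \<longleftrightarrow>
    (\<forall>\<phi>. atom_ok 1 X \<phi> \<longrightarrow> atom_holds lt [b1] \<phi> = atom_holds lt [b2] \<phi>)"
    by (rule tp_eq_iff) auto
  also have "\<dots> \<longleftrightarrow> sametp lt b1 b2 X"
  proof
    assume h: "\<forall>\<phi>. atom_ok 1 X \<phi> \<longrightarrow> atom_holds lt [b1] \<phi> = atom_holds lt [b2] \<phi>"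
    show "sametp lt b1 b2 X" unfolding sametp_def
    proof (intro conjI ballI)
      fix c assume c: "c \<in> X"
      show "lt b1 c = lt b2 c" using h[rule_format, of "Less (Var 0) (Par c)"] c by simp
      show "lt c b1 = lt c b2" using h[rule_format, of "Less (Par c) (Var 0)"] c by simp
      show "(b1 = c) = (b2 = c)" using h[rule_format, of "Equal (Var 0) (Par c)"] c by simp
    next
      show "lt b1 b1 = lt b2 b2" using h[rule_format, of "Less (Var 0) (Var 0)"] by simp
    qed
  next
    assume s: "sametp lt b1 b2 X"
    note R = sametp_rules[OF s]
    show "\<forall>\<phi>. atom_ok 1 X \<phi> \<longrightarrow> atom_holds lt [b1] \<phi> = atom_holds lt [b2] \<phi>"
    proof (intro allI impI)
      fix \<phi> assume ok: "atom_ok 1 X \<phi>"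
      show "atom_holds lt [b1] \<phi> = atom_holds lt [b2] \<phi>"
      proof (cases \<phi>)
        case (Less t u)
        have "t = Var 0 \<or> (\<exists>p\<in>X. t = Par p)" "u = Var 0 \<or> (\<exists>p\<in>X. u = Par p)"
          using tm_ok1[of X t] tm_ok1[of X u] ok Less by (metis atom_ok.simps)+
        then show ?thesis using Less by (elim disjE bexE) (simp_all add: R)
      next
        case (Equal t u)
        have "t = Var 0 \<or> (\<exists>p\<in>X. t = Par p)" "u = Var 0 \<or> (\<exists>p\<in>X. u = Par p)"
          using tm_ok1[of X t] tm_ok1[of X u] ok Equal by (metis atom_ok.simps)+
        then show ?thesis using Equal by (elim disjE bexE) (simp_all add: R)
      qed
    qed
  qed
  finally show ?thesis .
qed

lemma tp2_char: assumes s: "sametp lt b1 b2 X"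
  shows "tp_bs lt [a, b1] X = tp_bs lt [a, b2] X \<longleftrightarrow>
     (lt a b1 \<longleftrightarrow> lt a b2) \<and> (lt b1 a \<longleftrightarrow> lt b2 a) \<and> (a = b1 \<longleftrightarrow> a = b2)"
proof -
  note R = sametp_rules[OF s]
  have "tp_bs lt [a, b1] X = tp_bs lt [a, b2] X \<longleftrightarrow>
    (\<forall>\<phi>. atom_ok 2 X \<phi> \<longrightarrow> atom_holds lt [a, b1] \<phi> = atom_holds lt [a, b2] \<phi>)"
    by (rule tp_eq_iff) auto
  also have "\<dots> \<longleftrightarrow> (lt a b1 \<longleftrightarrow> lt a b2) \<and> (lt b1 a \<longleftrightarrow> lt b2 a) \<and> (a = b1 \<longleftrightarrow> a = b2)"
  proof
    assume h: "\<forall>\<phi>. atom_ok 2 X \<phi> \<longrightarrow> atom_holds lt [a, b1] \<phi> = atom_holds lt [a, b2] \<phi>"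
    show "(lt a b1 \<longleftrightarrow> lt a b2) \<and> (lt b1 a \<longleftrightarrow> lt b2 a) \<and> (a = b1 \<longleftrightarrow> a = b2)"
      using h[rule_format, of "Less (Var 0) (Var 1)"] h[rule_format, of "Less (Var 1) (Var 0)"]
        h[rule_format, of "Equal (Var 0) (Var 1)"] by simp
  next
    assume t: "(lt a b1 \<longleftrightarrow> lt a b2) \<and> (lt b1 a \<longleftrightarrow> lt b2 a) \<and> (a = b1 \<longleftrightarrow> a = b2)"
    hence T: "lt a b1 = lt a b2" "lt b1 a = lt b2 a" "(a = b1) = (a = b2)" "(b1 = a) = (b2 = a)" by auto
    show "\<forall>\<phi>. atom_ok 2 X \<phi> \<longrightarrow> atom_holds lt [a, b1] \<phi> = atom_holds lt [a, b2] \<phi>"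
    proof (intro allI impI)
      fix \<phi> assume ok: "atom_ok 2 X \<phi>"
      show "atom_holds lt [a, b1] \<phi> = atom_holds lt [a, b2] \<phi>"
      proof (cases \<phi>)
        case (Less t u)
        have "t = Var 0 \<or> t = Var 1 \<or> (\<exists>p\<in>X. t = Par p)" "u = Var 0 \<or> u = Var 1 \<or> (\<exists>p\<in>X. u = Par p)"
          using tm_ok2[of X t] tm_ok2[of X u] ok Less by (metis atom_ok.simps)+
        then show ?thesis using Less by (elim disjE bexE) (simp_all add: R T)
      next
        case (Equal t u)
        have "t = Var 0 \<or> t = Var 1 \<or> (\<exists>p\<in>X. t = Par p)" "u = Var 0 \<or> u = Var 1 \<or> (\<exists>p\<in>X. u = Par p)"
          using tm_ok2[of X t] tm_ok2[of X u] ok Equal by (metis atom_ok.simps)+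
        then show ?thesis using Equal by (elim disjE bexE) (simp_all add: R T)
      qed
    qed
  qed
  finally show ?thesis .
qed

lemma split_char: "bs_splits lt a B X \<longleftrightarrow> (\<exists>b1\<in>B. \<exists>b2\<in>B. sametp lt b1 b2 X \<and>
   \<not> ((lt a b1 \<longleftrightarrow> lt a b2) \<and> (lt b1 a \<longleftrightarrow> lt b2 a) \<and> (a = b1 \<longleftrightarrow> a = b2)))"
proof -
  have "\<And>b1 b2. (tp_bs lt [b1] X = tp_bs lt [b2] X \<and> tp_bs lt [a, b1] X \<noteq> tp_bs lt [a, b2] X) \<longleftrightarrow>
     (sametp lt b1 b2 X \<and> \<not> ((lt a b1 \<longleftrightarrow> lt a b2) \<and> (lt b1 a \<longleftrightarrow> lt b2 a) \<and> (a = b1 \<longleftrightarrow> a = b2)))"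
  proof -
    fix b1 b2
    show "?thesis b1 b2"
    proof (cases "sametp lt b1 b2 X")
      case True
      then show ?thesis using tp1_char[of lt b1 X b2] tp2_char[OF True, of a] by simp
    next
      case False
      then show ?thesis using tp1_char[of lt b1 X b2] by simp
    qed
  qed
  thus ?thesis unfolding bs_splits_def by simp
qed

lemma sametp_mono: "sametp lt b1 b2 Y \<Longrightarrow> X \<subseteq> Y \<Longrightarrow> sametp lt b1 b2 X"
  unfolding sametp_def by blast

lemma split_mono: "bs_splits lt a B Y \<Longrightarrow> X \<subseteq> Y \<Longrightarrow> bs_splits lt a B X"
proof -
  assume a: "bs_splits lt a B Y" "X \<subseteq> Y"
  then obtain b1 b2 where "b1 \<in> B" "b2 \<in> B" "sametp lt b1 b2 Y"
    "\<not> ((lt a b1 \<longleftrightarrow> lt a b2) \<and> (lt b1 a \<longleftrightarrow> lt b2 a) \<and> (a = b1 \<longleftrightarrow> a = b2))"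
    unfolding split_char by blast
  moreover have "sametp lt b1 b2 X" using sametp_mono[OF \<open>sametp lt b1 b2 Y\<close> a(2)] .
  ultimately show ?thesis unfolding split_char by blast
qed

lemma nosplit_mem: "a \<in> X \<Longrightarrow> \<not> bs_splits lt a B X"
proof
  assume a: "a \<in> X" "bs_splits lt a B X"
  then obtain b1 b2 where "sametp lt b1 b2 X"
    "\<not> ((lt a b1 \<longleftrightarrow> lt a b2) \<and> (lt b1 a \<longleftrightarrow> lt b2 a) \<and> (a = b1 \<longleftrightarrow> a = b2))"
    unfolding split_char by blast
  moreover note R = sametp_rules[OF this(1)]
  have "lt b1 a = lt b2 a" "lt a b1 = lt a b2" "(a = b1) = (a = b2)" using R(1,2,4)[OF a(1)] by auto
  ultimately show False by blast
qed

lemma nosplit_R: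
  assumes lin: "\<forall>x\<in>U. \<forall>y\<in>U. \<forall>z\<in>U. \<not> lt x x \<and> (lt x y \<and> lt y z \<longrightarrow> lt x z) \<and> (lt x y \<or> x = y \<or> lt y x)"
    and sub: "a \<in> U" "B \<subseteq> U" "X \<subseteq> U" and aB: "a \<notin> B"
    and R: "\<forall>b\<in>B. lt a b \<longrightarrow> (\<exists>c\<in>X. lt a c \<and> (lt c b \<or> c = b))"
  shows "\<not> bs_splits lt a B X"
proof
  have irr: "\<And>x. x \<in> U \<Longrightarrow> \<not> lt x x" using lin by blast
  have tr: "\<And>x y z. x \<in> U \<Longrightarrow> y \<in> U \<Longrightarrow> z \<in> U \<Longrightarrow> lt x y \<Longrightarrow> lt y z \<Longrightarrow> lt x z"
    using lin by blast
  have tot: "\<And>x y. x \<in> U \<Longrightarrow> y \<in> U \<Longrightarrow> lt x y \<or> x = y \<or> lt y x" using lin by blast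
  assume "bs_splits lt a B X"
  then obtain b1 b2 where b: "b1 \<in> B" "b2 \<in> B" "sametp lt b1 b2 X" and
    nd: "\<not> ((lt a b1 \<longleftrightarrow> lt a b2) \<and> (lt b1 a \<longleftrightarrow> lt b2 a) \<and> (a = b1 \<longleftrightarrow> a = b2))"
    unfolding split_char by blast
  have ne: "a \<noteq> b1" "a \<noteq> b2" using aB b by auto
  have key: "False" if h: "b1' \<in> B" "b2' \<in> B" "sametp lt b1' b2' X" "lt a b1'" "\<not> lt a b2'" "a \<noteq> b2'" for b1' b2'
  proof -
    have U: "b2' \<in> U" "b1' \<in> U" using h sub by auto
    hence "lt b2' a" using h tot[OF sub(1) U(1)] by blast
    obtain c where c: "c \<in> X" "lt a c" "lt c b1' \<or> c = b1'" using R h(1,4) by blast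
    have cU: "c \<in> U" using c sub by auto
    have "lt b2' c" using tr[OF U(1) sub(1) cU \<open>lt b2' a\<close> c(2)] .
    note RR = sametp_rules[OF h(3)]
    show False
    proof (cases "c = b1'")
      case True
      hence "b2' = c" using RR(4)[OF c(1)] by simp
      thus False using \<open>lt b2' c\<close> irr cU by blast
    next
      case False
      hence "lt c b2'" using RR(2)[OF c(1)] c(3) by simp
      thus False using tr[OF U(1) cU U(1) \<open>lt b2' c\<close>] irr U(1) by blast
    qed
  qed
  have s21: "sametp lt b2 b1 X" using b(3) unfolding sametp_def by auto
  have e1: "lt a b1 \<longleftrightarrow> lt a b2" using key[OF b(1,2,3)] key[OF b(2,1) s21] ne by blast
  have U: "b1 \<in> U" "b2 \<in> U" using b sub by auto
  have "lt b1 a \<longleftrightarrow> \<not> lt a b1" using tot[OF sub(1) U(1)] irr tr[OF sub(1) U(1) sub(1)] sub(1) ne(1) by blast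
  moreover have "lt b2 a \<longleftrightarrow> \<not> lt a b2" using tot[OF sub(1) U(2)] irr tr[OF sub(1) U(2) sub(1)] sub(1) ne(2) by blast
  ultimately have "lt b1 a \<longleftrightarrow> lt b2 a" using e1 by simp
  thus False using nd ne e1 by blast
qed



context kord begin

lemma base_tri: assumes "f \<noteq> g" shows "base_lt r f g \<or> base_lt r g f"
proof -
  have ex: "\<exists>n. f n \<noteq> g n" using assms by (meson ext)
  define n where "n = (LEAST n. f n \<noteq> g n)"
  have n1: "f n \<noteq> g n" unfolding n_def using LeastI_ex[OF ex] .
  have n2: "\<forall>m<n. f m = g m" unfolding n_def using not_less_Least by blast
  have "lex_kq r (f n) (g n) \<or> lex_kq r (g n) (f n)"
  proof (cases "fst (f n) = fst (g n)")
    case True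
    hence "snd (f n) \<noteq> snd (g n)" using n1 by (metis prod_eqI)
    hence "snd (f n) < snd (g n) \<or> snd (g n) < snd (f n)" by linarith
    thus ?thesis unfolding lex_kq_def using True by auto
  next
    case False
    thus ?thesis unfolding lex_kq_def using trich by blast
  qed
  thus ?thesis unfolding base_lt_def using n1 n2 by metis
qed

definition base_d :: "'k \<Rightarrow> (nat \<Rightarrow> 'k \<times> rat) set" where
  "base_d d = {f\<in>base_set r. \<forall>n. ordlt r (fst (f n)) d}"

lemma fin_vals: assumes "f \<in> base_set r" shows "finite (range (\<lambda>n. fst (f n)))"
proof -
  have "range (\<lambda>n. fst (f n)) \<subseteq> insert (kzero r) ((\<lambda>n. fst (f n)) ` {n. fst (f n) \<noteq> kzero r})"
    by auto
  moreover have "finite {n. fst (f n) \<noteq> kzero r}" using assms unfolding base_set_def by simp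
  ultimately show ?thesis using finite_subset by blast
qed

lemma base_gap:
  assumes f: "f \<in> base_set r" "f \<notin> base_d d" and d: "isLimit r d"
  shows "\<exists>b. ordlt r b d \<and> (\<forall>g\<in>base_d d. base_lt r f g \<longrightarrow> (\<exists>\<mu>\<in>base_d b. base_lt r f \<mu> \<and> base_lt r \<mu> g))"
proof -
  have ex: "\<exists>n. \<not> ordlt r (fst (f n)) d" using f unfolding base_d_def by blast
  define n where "n = (LEAST n. \<not> ordlt r (fst (f n)) d)"
  have n1: "\<not> ordlt r (fst (f n)) d" unfolding n_def using LeastI_ex[OF ex] .
  have n2: "\<forall>m<n. ordlt r (fst (f m)) d" unfolding n_def using not_less_Least by blast
  define K where "K = insert (kzero r) ((\<lambda>k. fst (f k)) ` {..<n})"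
  have "finite K" unfolding K_def by simp
  moreover have "\<forall>k\<in>K. ordlt r k d" unfolding K_def using n2 zero_limit[OF d] by auto
  ultimately obtain b where b: "ordlt r b d" "\<forall>k\<in>K. ordlt r k b" using finite_bound_limit d by blast
  have bz: "ordlt r (kzero r) b" using b unfolding K_def by simp
  have bf: "\<And>k. k < n \<Longrightarrow> ordlt r (fst (f k)) b" using b unfolding K_def by simp
  have "\<forall>g\<in>base_d d. base_lt r f g \<longrightarrow> (\<exists>\<mu>\<in>base_d b. base_lt r f \<mu> \<and> base_lt r \<mu> g)"
  proof (intro ballI impI)
    fix g assume g: "g \<in> base_d d" "base_lt r f g"
    then obtain m where m: "\<forall>k<m. f k = g k" "f m \<noteq> g m" "lex_kq r (f m) (g m)"
      unfolding base_lt_def by blast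
    have gd: "\<And>k. ordlt r (fst (g k)) d" using g unfolding base_d_def by blast
    have "m < n"
    proof (rule ccontr)
      assume "\<not> m < n"
      hence "n < m \<or> n = m" by auto
      thus False
      proof
        assume "n < m" hence "f n = g n" using m by blast
        thus False using gd[of n] n1 by simp
      next
        assume nm: "n = m"
        from m(3) have "ordlt r (fst (f m)) (fst (g m)) \<or> fst (f m) = fst (g m)" unfolding lex_kq_def by blast
        thus False using gd[of m] n1 nm lt_trans by metis
      qed
    qed
    define q where "q = (if fst (f m) = fst (g m) then (snd (f m) + snd (g m)) / 2 else snd (f m) + 1)"
    define \<mu> where "\<mu> = (\<lambda>k. if k < m then f k else if k = m then (fst (f m), q) else (kzero r, 0))"
    have eqsnd: "fst (f m) = fst (g m) \<Longrightarrow> snd (f m) < snd (g m)"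
      using m(3) unfolding lex_kq_def by auto
    have q1: "snd (f m) < q" unfolding q_def using eqsnd by auto
    have q2: "fst (f m) = fst (g m) \<Longrightarrow> q < snd (g m)" unfolding q_def using eqsnd by auto
    have fin: "finite {k. fst (\<mu> k) \<noteq> kzero r}"
    proof -
      have "{k. fst (\<mu> k) \<noteq> kzero r} \<subseteq> {..m}" unfolding \<mu>_def by auto
      thus ?thesis using finite_subset by blast
    qed
    have mub: "\<mu> \<in> base_d b" unfolding base_d_def base_set_def
    proof (intro CollectI conjI allI fin)
      fix k show "ordlt r (fst (\<mu> k)) b"
        unfolding \<mu>_def using bf \<open>m < n\<close> bz by auto
    qed
    have l1: "base_lt r f \<mu>" unfolding base_lt_def
    proof (intro exI[of _ m] conjI)
      show "\<forall>k<m. f k = \<mu> k" unfolding \<mu>_def by simp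
      show "f m \<noteq> \<mu> m" unfolding \<mu>_def using q1 by (auto simp: prod_eq_iff)
      show "lex_kq r (f m) (\<mu> m)" unfolding \<mu>_def lex_kq_def using q1 by simp
    qed
    have l2: "base_lt r \<mu> g" unfolding base_lt_def
    proof (intro exI[of _ m] conjI)
      show "\<forall>k<m. \<mu> k = g k" unfolding \<mu>_def using m(1) by simp
      show "\<mu> m \<noteq> g m" unfolding \<mu>_def using q2 by (auto simp: prod_eq_iff)
      show "lex_kq r (\<mu> m) (g m)"
      proof (cases "fst (f m) = fst (g m)")
        case True then show ?thesis unfolding \<mu>_def lex_kq_def using q2 by simp
      next
        case False
        hence "ordlt r (fst (f m)) (fst (g m))" using m(3) unfolding lex_kq_def by blast
        then show ?thesis unfolding \<mu>_def lex_kq_def by simp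
      qed
    qed
    show "\<exists>\<mu>\<in>base_d b. base_lt r f \<mu> \<and> base_lt r \<mu> g" using mub l1 l2 by blast
  qed
  thus ?thesis using b(1) by blast
qed

lemma under_small: "|{b. (b, g) \<in> r}| <o r"
proof -
  have eq: "{b. (b, g) \<in> r} = underS r g \<union> {g}" unfolding underS_def by auto
  have 1: "|underS r g| <o r" using card_of_underS[OF CO] by simp
  have 2: "|{g}| <o r" by (rule finite_small) simp
  have 3: "\<not> finite (Field r)" using infinite_UNIV_k by simp
  have "|underS r g \<union> {g}| <o r" using card_of_Un_ordLess_infinite_Field[OF 3 CO 1 2] .
  thus ?thesis unfolding eq .
qed

lemma cover:
  assumes mono: "\<And>i j. (i, j) \<in> r \<Longrightarrow> E i \<subseteq> E j" and S: "S \<subseteq> (\<Union>i. E i)" and sm: "|S| <o r"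
  shows "\<exists>g. S \<subseteq> E g"
proof -
  define h where "h x = (SOME i. x \<in> E i)" for x
  have h: "x \<in> E (h x)" if xS: "x \<in> S" for x
  proof -
    obtain i where "x \<in> E i" using S xS by blast
    thus ?thesis unfolding h_def by (rule someI)
  qed
  have "|h ` S| <o r" using ordLeq_ordLess_trans[OF card_of_image sm] .
  then obtain b where b: "\<forall>k\<in>h ` S. (k, b) \<in> r" using bounded by blast
  have "S \<subseteq> E b" using h b mono by blast
  thus ?thesis by blast
qed

end

locale setting = kord r for r :: "'k rel" +
  fixes lt :: "'a \<Rightarrow> 'a \<Rightarrow> bool"
    and II :: "'k \<Rightarrow> 'a set"
    and emb :: "(nat \<Rightarrow> 'k \<times> rat) \<Rightarrow> 'a"
    and sc :: "'k \<Rightarrow> 'a \<Rightarrow> 'a"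
  assumes gamma_omega: "\<forall>X :: 'k set. |X| <o r \<longrightarrow> |Func (UNIV :: nat set) X| <o r"
    and I0: "II (kzero r) = emb ` base_set r"
    and emb_inj: "inj_on emb (base_set r)"
    and emb_ord: "\<forall>f\<in>base_set r. \<forall>g\<in>base_set r. lt (emb f) (emb g) \<longleftrightarrow> base_lt r f g"
    and Isucc: "\<forall>i. II (ksucc r i) = II i \<union> sc i ` II i"
    and sc_new: "\<forall>i. \<forall>\<nu>\<in>II i. sc i \<nu> \<notin> II i"
    and sc_inj: "\<forall>i. inj_on (sc i) (II i)"
    and sc_below: "\<forall>i. \<forall>\<nu>\<in>II i. lt (sc i \<nu>) \<nu>"
    and sc_cut: "\<forall>i. \<forall>\<nu>\<in>II i. \<forall>\<tau>\<in>II i - {\<nu>}. lt \<tau> (sc i \<nu>) \<longleftrightarrow> lt \<tau> \<nu>"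
    and sc_ord: "\<forall>i. \<forall>\<nu>\<in>II i. \<forall>\<mu>\<in>II i. \<nu> \<noteq> \<mu> \<longrightarrow> (lt (sc i \<nu>) (sc i \<mu>) \<longleftrightarrow> lt \<nu> \<mu>)"
    and Ilim: "\<forall>\<delta>. isLimit r \<delta> \<longrightarrow> II \<delta> = (\<Union>i\<in>{i. ordlt r i \<delta>}. II i)"
    and lin: "\<forall>x\<in>(\<Union>i. II i). \<forall>y\<in>(\<Union>i. II i). \<forall>z\<in>(\<Union>i. II i).
               \<not> lt x x \<and> (lt x y \<and> lt y z \<longrightarrow> lt x z) \<and> (lt x y \<or> x = y \<or> lt y x)"
begin

abbreviation "AA \<equiv> (\<Union>i. II i)"

lemma irrA: "x \<in> AA \<Longrightarrow> \<not> lt x x" using lin by blast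
lemma trA: "x \<in> AA \<Longrightarrow> y \<in> AA \<Longrightarrow> z \<in> AA \<Longrightarrow> lt x y \<Longrightarrow> lt y z \<Longrightarrow> lt x z"
  using lin by blast
lemma totA: "x \<in> AA \<Longrightarrow> y \<in> AA \<Longrightarrow> lt x y \<or> x = y \<or> lt y x" using lin by blast
lemma asymA: "x \<in> AA \<Longrightarrow> y \<in> AA \<Longrightarrow> lt x y \<Longrightarrow> \<not> lt y x"
  using trA irrA by blast

lemma II_mono_aux: "\<forall>i. (i, j) \<in> r \<longrightarrow> II i \<subseteq> II j"
proof (induct j rule: kinduct)
  case zero
  then show ?case using antisym_r kzero_le by blast
next
  case (succ j)
  show ?case
  proof (intro allI impI)
    fix i assume "(i, ksucc r j) \<in> r"
    hence "i = ksucc r j \<or> ordlt r i (ksucc r j)" unfolding ordlt_def by blast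
    thus "II i \<subseteq> II (ksucc r j)"
    proof
      assume "ordlt r i (ksucc r j)"
      hence "(i, j) \<in> r" by (rule lt_ksucc)
      thus ?thesis using succ Isucc by blast
    qed simp
  qed
next
  case (limit d)
  show ?case
  proof (intro allI impI)
    fix i assume "(i, d) \<in> r"
    hence "i = d \<or> ordlt r i d" unfolding ordlt_def by blast
    thus "II i \<subseteq> II d" using Ilim limit(1) by blast
  qed
qed

lemma II_mono: "(i, j) \<in> r \<Longrightarrow> II i \<subseteq> II j" using II_mono_aux by blast

lemma common: "x \<in> II i \<Longrightarrow> y \<in> II j \<Longrightarrow> \<exists>k. x \<in> II k \<and> y \<in> II k"
  using II_mono total_r by blast

lemma sc_in: "x \<in> II i \<Longrightarrow> sc i x \<in> II (ksucc r i)" using Isucc by blast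

lemma sc_stage: assumes "x \<in> II i" "sc i x \<in> II j" shows "ordlt r i j"
proof (rule ccontr)
  assume "\<not> ordlt r i j"
  hence "(j, i) \<in> r" using not_lt by blast
  thus False using II_mono assms sc_new by blast
qed

lemma sc_uniq: assumes "x \<in> II i" "y \<in> II j" "sc i x = sc j y" shows "i = j" "x = y"
proof -
  have "\<not> ordlt r i j"
  proof
    assume "ordlt r i j"
    hence "sc i x \<in> II j" using sc_in[OF assms(1)] II_mono ksucc_le by blast
    hence "sc j y \<in> II j" using assms(3) by simp
    thus False using sc_new assms(2) by blast
  qed
  moreover have "\<not> ordlt r j i"
  proof
    assume "ordlt r j i"
    hence "sc j y \<in> II i" using sc_in[OF assms(2)] II_mono ksucc_le by blast
    hence "sc i x \<in> II i" using assms(3) by simp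
    thus False using sc_new assms(1) by blast
  qed
  ultimately show "i = j" using trich by blast
  thus "x = y" using assms sc_inj inj_on_def by metis
qed

lemma emb_in: "f \<in> base_set r \<Longrightarrow> emb f \<in> II i"
  using I0 II_mono kzero_le by blast

lemma emb_ne_sc: "f \<in> base_set r \<Longrightarrow> x \<in> II i \<Longrightarrow> emb f \<noteq> sc i x"
  using emb_in sc_new by metis

inductive rootrel :: "'a \<Rightarrow> (nat \<Rightarrow> 'k \<times> rat) \<Rightarrow> bool" where
  rbase: "f \<in> base_set r \<Longrightarrow> rootrel (emb f) f"
| rstep: "rootrel x f \<Longrightarrow> x \<in> II i \<Longrightarrow> rootrel (sc i x) f"

lemma rootrel_base: "rootrel x f \<Longrightarrow> f \<in> base_set r"
  by (induct rule: rootrel.induct) auto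

lemma rootrel_sc: assumes "rootrel (sc i x) f" "x \<in> II i" shows "rootrel x f"
  using assms(1)
proof (cases rule: rootrel.cases)
  case rbase
  then show ?thesis using emb_ne_sc assms(2) by metis
next
  case (rstep y j)
  then show ?thesis using sc_uniq[OF assms(2), of y j] by simp
qed

lemma rootrel_emb: assumes "rootrel (emb g) f" "g \<in> base_set r" shows "f = g"
  using assms(1)
proof (cases rule: rootrel.cases)
  case rbase
  then show ?thesis using emb_inj assms(2) inj_on_def by metis
next
  case (rstep y j)
  then show ?thesis using emb_ne_sc assms(2) by metis
qed

lemma root_ex_aux: "\<forall>x\<in>II i. \<exists>f. rootrel x f"
proof (induct i rule: kinduct)
  case zero
  then show ?case using I0 rbase by auto
next
  case (succ j)
  show ?case
  proof
    fix x assume "x \<in> II (ksucc r j)"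
    hence "x \<in> II j \<or> (\<exists>y\<in>II j. x = sc j y)" using Isucc by blast
    thus "\<exists>f. rootrel x f"
    proof
      assume "\<exists>y\<in>II j. x = sc j y"
      then obtain y where y: "y \<in> II j" "x = sc j y" by blast
      then obtain f where "rootrel y f" using succ by blast
      thus ?thesis using rstep y by blast
    qed (use succ in blast)
  qed
next
  case (limit d)
  show ?case
  proof
    fix x assume "x \<in> II d"
    then obtain i where "ordlt r i d" "x \<in> II i" using Ilim limit(1) by blast
    thus "\<exists>f. rootrel x f" using limit(2) by blast
  qed
qed

lemma root_ex: "x \<in> AA \<Longrightarrow> \<exists>f. rootrel x f" using root_ex_aux by blast

lemma Inv_aux: "\<forall>x\<in>II i. \<forall>y\<in>II i. \<forall>f g. rootrel x f \<longrightarrow> rootrel y g \<longrightarrow> base_lt r f g \<longrightarrow> lt x y"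
proof (induct i rule: kinduct)
  case zero
  show ?case
  proof (intro ballI allI impI)
    fix x y f g assume xy: "x \<in> II (kzero r)" "y \<in> II (kzero r)" and h: "rootrel x f" "rootrel y g" "base_lt r f g"
    obtain f' g' where fg: "f' \<in> base_set r" "g' \<in> base_set r" "x = emb f'" "y = emb g'" using xy I0 by auto
    have "f = f'" "g = g'" using rootrel_emb h fg by auto
    thus "lt x y" using emb_ord fg h by auto
  qed
next
  case (succ j)
  have IH: "lt x y" if "x \<in> II j" "y \<in> II j" "rootrel x f" "rootrel y g" "base_lt r f g" for x y f g
    using succ that by blast
  show ?case
  proof (intro ballI allI impI)
    fix x y f g assume xy: "x \<in> II (ksucc r j)" "y \<in> II (ksucc r j)" and h: "rootrel x f" "rootrel y g" "base_lt r f g"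
    have noself: "\<not> (rootrel v f \<and> rootrel v g)" if vj: "v \<in> II j" for v
    proof
      assume "rootrel v f \<and> rootrel v g"
      hence "lt v v" using IH[OF vj vj _ _ h(3)] by blast
      thus False using irrA vj by blast
    qed
    have cs: "(x \<in> II j \<or> (\<exists>\<nu>\<in>II j. x = sc j \<nu>)) \<and> (y \<in> II j \<or> (\<exists>\<mu>\<in>II j. y = sc j \<mu>))"
      using xy Isucc by blast
    have xA: "x \<in> AA" and yA: "y \<in> AA" using xy by auto
    show "lt x y"
    proof (cases "x \<in> II j")
      case xo: True
      show ?thesis
      proof (cases "y \<in> II j")
        case True then show ?thesis using IH xo h by blast
      next
        case False
        then obtain \<mu> where on: "\<mu> \<in> II j" "y = sc j \<mu>" using cs by blast
        have rg: "rootrel \<mu> g" using rootrel_sc h(2) on by simp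
        have "x \<noteq> \<mu>" using noself[OF on(1)] rg h(1) by blast
        have "lt x \<mu>" using IH[OF xo on(1) h(1) rg h(3)] .
        thus ?thesis using sc_cut on xo \<open>x \<noteq> \<mu>\<close> by blast
      qed
    next
      case xn: False
      then obtain \<nu> where no: "\<nu> \<in> II j" "x = sc j \<nu>" using cs by blast
      have rf: "rootrel \<nu> f" using rootrel_sc h(1) no by simp
      show ?thesis
      proof (cases "y \<in> II j")
        case yo: True
        have "y \<noteq> \<nu>" using noself[OF no(1)] rf h(2) by blast
        have "lt \<nu> y" using IH[OF no(1) yo rf h(2,3)] .
        hence "\<not> lt y \<nu>" using asymA[of \<nu> y] no(1) yo by blast
        hence "\<not> lt y x" using sc_cut no yo \<open>y \<noteq> \<nu>\<close> by blast
        moreover have "y \<noteq> x" using sc_new no yo by blast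
        ultimately show ?thesis using totA[OF xA yA] by blast
      next
        case False
        then obtain \<mu> where on: "\<mu> \<in> II j" "y = sc j \<mu>" using cs by blast
        have rg: "rootrel \<mu> g" using rootrel_sc h(2) on by simp
        have "\<nu> \<noteq> \<mu>" using noself[OF no(1)] rf rg by blast
        have "lt \<nu> \<mu>" using IH[OF no(1) on(1) rf rg h(3)] .
        thus ?thesis using sc_ord no on \<open>\<nu> \<noteq> \<mu>\<close> by blast
      qed
    qed
  qed
next
  case (limit d)
  show ?case
  proof (intro ballI allI impI)
    fix x y f g assume xy: "x \<in> II d" "y \<in> II d" and h: "rootrel x f" "rootrel y g" "base_lt r f g"
    obtain i where i: "ordlt r i d" "x \<in> II i" using xy Ilim limit(1) by blast
    obtain j where j: "ordlt r j d" "y \<in> II j" using xy Ilim limit(1) by blast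
    define k where "k = (if (i, j) \<in> r then j else i)"
    have k: "ordlt r k d" "x \<in> II k" "y \<in> II k" unfolding k_def using i j II_mono total_r by auto
    have "\<forall>x\<in>II k. \<forall>y\<in>II k. \<forall>f g. rootrel x f \<longrightarrow> rootrel y g \<longrightarrow> base_lt r f g \<longrightarrow> lt x y"
      using limit(2)[OF k(1)] .
    thus "lt x y" using k h by blast
  qed
qed

lemma InvA: assumes "x \<in> AA" "y \<in> AA" "rootrel x f" "rootrel y g" "base_lt r f g" shows "lt x y"
proof -
  obtain i j where "x \<in> II i" "y \<in> II j" using assms by blast
  then obtain k where k: "x \<in> II k" "y \<in> II k" using common by blast
  thus ?thesis using Inv_aux[of k] assms by blast
qed

end


context setting begin

lemma proj: "rootrel a f \<Longrightarrow> a \<notin> II d \<Longrightarrow>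
  \<exists>p\<in>II d. rootrel p f \<and> lt a p \<and> (\<forall>b\<in>II d. b \<noteq> p \<longrightarrow> (lt b a \<longleftrightarrow> lt b p))"
proof (induct rule: rootrel.induct)
  case (rbase f)
  then show ?case using emb_in by blast
next
  case (rstep x f i)
  have "\<not> ordlt r i d"
  proof
    assume "ordlt r i d"
    hence "II (ksucc r i) \<subseteq> II d" using II_mono ksucc_le by blast
    thus False using sc_in[OF rstep(3)] rstep(4) by blast
  qed
  hence sub: "II d \<subseteq> II i" using not_lt II_mono by blast
  have scA: "sc i x \<in> AA" using sc_in[OF rstep(3)] by blast
  have xA: "x \<in> AA" using rstep(3) by blast
  have below: "lt (sc i x) x" using sc_below rstep(3) by blast
  show ?case
  proof (cases "x \<in> II d")
    case True
    have "\<forall>b\<in>II d. b \<noteq> x \<longrightarrow> (lt b (sc i x) \<longleftrightarrow> lt b x)"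
    proof (intro ballI impI)
      fix b assume "b \<in> II d" "b \<noteq> x"
      hence "b \<in> II i - {x}" using sub by blast
      thus "lt b (sc i x) \<longleftrightarrow> lt b x" using sc_cut rstep(3) by blast
    qed
    then show ?thesis using True rstep(1) below by blast
  next
    case False
    then obtain p where p: "p \<in> II d" "rootrel p f" "lt x p" "\<forall>b\<in>II d. b \<noteq> p \<longrightarrow> (lt b x \<longleftrightarrow> lt b p)"
      using rstep(2) by blast
    have pA: "p \<in> AA" using p(1) by blast
    have "lt (sc i x) p" using trA[OF scA xA pA below p(3)] .
    moreover have "\<forall>b\<in>II d. b \<noteq> p \<longrightarrow> (lt b (sc i x) \<longleftrightarrow> lt b p)"
    proof (intro ballI impI)
      fix b assume b: "b \<in> II d" "b \<noteq> p"
      hence "b \<in> II i - {x}" using sub False by blast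
      hence "lt b (sc i x) \<longleftrightarrow> lt b x" using sc_cut rstep(3) by blast
      thus "lt b (sc i x) \<longleftrightarrow> lt b p" using p(4) b by blast
    qed
    ultimately show ?thesis using p(1,2) by blast
  qed
qed

definition DD :: "'k \<Rightarrow> 'a set" where
  "DD d = {x\<in>II d. \<exists>f\<in>base_d d. rootrel x f}"

lemma D_mono: "(b, c) \<in> r \<Longrightarrow> DD b \<subseteq> DD c"
  unfolding DD_def base_d_def using II_mono lt_le_trans by blast

lemma D_sub: "DD d \<subseteq> AA" unfolding DD_def by blast

lemma D_cont: assumes d: "isLimit r d" and x: "x \<in> DD d" shows "\<exists>b. ordlt r b d \<and> x \<in> DD b"
proof -
  obtain f where f: "f \<in> base_d d" "rootrel x f" "x \<in> II d" using x unfolding DD_def by blast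
  obtain i where i: "ordlt r i d" "x \<in> II i" using f(3) Ilim d by blast
  have fb: "f \<in> base_set r" using f unfolding base_d_def by blast
  define K where "K = insert i (range (\<lambda>n. fst (f n)))"
  have "finite K" unfolding K_def using fin_vals[OF fb] by simp
  moreover have "\<forall>k\<in>K. ordlt r k d" unfolding K_def using i f(1) unfolding base_d_def by blast
  ultimately obtain b where b: "ordlt r b d" "\<forall>k\<in>K. ordlt r k b" using finite_bound_limit d by blast
  have "x \<in> II b" using b i II_mono lt_imp_le unfolding K_def by blast
  moreover have "f \<in> base_d b" using b fb unfolding K_def base_d_def by blast
  ultimately show ?thesis using b(1) f(2) unfolding DD_def by blast
qed

lemma D_cover: assumes x: "x \<in> AA" shows "\<exists>b. x \<in> DD b"
proof -
  obtain i where i: "x \<in> II i" using x by blast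
  obtain f where f: "rootrel x f" using root_ex x by blast
  have fb: "f \<in> base_set r" using rootrel_base f .
  define K where "K = insert i (range (\<lambda>n. fst (f n)))"
  have "finite K" unfolding K_def using fin_vals[OF fb] by simp
  then obtain b where b: "\<forall>k\<in>K. ordlt r k b" using sbounded finite_small by blast
  have "x \<in> II b" using b i II_mono lt_imp_le unfolding K_def by blast
  moreover have "f \<in> base_d b" using b fb unfolding K_def base_d_def by blast
  ultimately show ?thesis using f unfolding DD_def by blast
qed

lemma rat_emb: "\<exists>e :: rat \<Rightarrow> 'k. inj e \<and> |range e| <o r"
proof -
  have 1: "|UNIV :: rat set| \<le>o |UNIV :: nat set|"
    using card_of_ordLeq[of "UNIV :: rat set" "UNIV :: nat set"] inj_to_nat by blast
  have 2: "|UNIV :: nat set| <o r" using ordIso_ordLess_trans[OF card_of_nat uncountable] .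
  have 3: "|UNIV :: rat set| <o r" using ordLeq_ordLess_trans[OF 1 2] .
  have 4: "|UNIV :: 'k set| =o r" using card_of_Field_ordIso[OF CO] by simp
  have "|UNIV :: rat set| \<le>o |UNIV :: 'k set|"
    using ordLess_imp_ordLeq[OF ordLess_ordIso_trans[OF 3 ordIso_symmetric[OF 4]]] .
  then obtain e :: "rat \<Rightarrow> 'k" where e: "inj e" using card_of_ordLeq[of "UNIV :: rat set" "UNIV :: 'k set"] by blast
  have "|range e| <o r" using ordLeq_ordLess_trans[OF card_of_image 3] .
  thus ?thesis using e by blast
qed

lemma base_d_small: "|base_d b| <o r"
proof -
  obtain e :: "rat \<Rightarrow> 'k" where e: "inj e" "|range e| <o r" using rat_emb by blast
  define X where "X = underS r b \<union> range e"
  have inf: "\<not> finite (Field r)" using infinite_UNIV_k by simp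
  have "|underS r b| <o r" using card_of_underS[OF CO] by simp
  hence X: "|X| <o r" unfolding X_def using card_of_Un_ordLess_infinite_Field[OF inf CO _ e(2)] by blast
  hence F: "|Func (UNIV :: nat set) X| <o r" using gamma_omega by blast
  define \<Phi> where "\<Phi> f = (\<lambda>n. if even n then fst (f (n div 2)) else e (snd (f (n div 2))))"
    for f :: "nat \<Rightarrow> 'k \<times> rat"
  have "inj_on \<Phi> (base_d b)"
  proof (rule inj_onI)
    fix f g assume "\<Phi> f = \<Phi> g"
    hence h: "\<And>n. \<Phi> f n = \<Phi> g n" by simp
    show "f = g"
    proof
      fix k
      have "fst (f k) = fst (g k)" using h[of "2*k"] unfolding \<Phi>_def by simp
      moreover have "e (snd (f k)) = e (snd (g k))" using h[of "2*k+1"] unfolding \<Phi>_def by simp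
      hence "snd (f k) = snd (g k)" using e(1) inj_eq by metis
      ultimately show "f k = g k" by (simp add: prod_eq_iff)
    qed
  qed
  moreover have "\<Phi> ` base_d b \<subseteq> Func (UNIV :: nat set) X"
  proof
    fix y assume "y \<in> \<Phi> ` base_d b"
    then obtain f where f: "f \<in> base_d b" "y = \<Phi> f" by blast
    have "\<forall>n. y n \<in> X"
    proof
      fix n
      have "ordlt r (fst (f (n div 2))) b" using f(1) unfolding base_d_def by blast
      hence "fst (f (n div 2)) \<in> underS r b" unfolding underS_def ordlt_def by blast
      thus "y n \<in> X" unfolding f(2) \<Phi>_def X_def by auto
    qed
    thus "y \<in> Func (UNIV :: nat set) X" unfolding Func_def by blast
  qed
  ultimately have "|base_d b| \<le>o |Func (UNIV :: nat set) X|" using card_of_ordLeq by blast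
  thus ?thesis using ordLeq_ordLess_trans F by blast
qed

lemma S_small: assumes Bs: "|Bs| <o r" shows "|{x\<in>II i. \<exists>f\<in>Bs. rootrel x f}| <o r"
proof (induct i rule: kinduct)
  case zero
  have "{x\<in>II (kzero r). \<exists>f\<in>Bs. rootrel x f} \<subseteq> emb ` Bs"
  proof
    fix x assume "x \<in> {x\<in>II (kzero r). \<exists>f\<in>Bs. rootrel x f}"
    then obtain f g where "f \<in> Bs" "rootrel x f" "g \<in> base_set r" "x = emb g" using I0 by auto
    thus "x \<in> emb ` Bs" using rootrel_emb by blast
  qed
  hence "|{x\<in>II (kzero r). \<exists>f\<in>Bs. rootrel x f}| \<le>o |emb ` Bs|" using card_of_mono1 by blast
  moreover have "|emb ` Bs| <o r" using ordLeq_ordLess_trans[OF card_of_image Bs] .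
  ultimately show ?case using ordLeq_ordLess_trans by blast
next
  case (succ j)
  let ?S = "{x\<in>II j. \<exists>f\<in>Bs. rootrel x f}"
  have "{x\<in>II (ksucc r j). \<exists>f\<in>Bs. rootrel x f} \<subseteq> ?S \<union> sc j ` ?S"
  proof
    fix x assume x: "x \<in> {x\<in>II (ksucc r j). \<exists>f\<in>Bs. rootrel x f}"
    then obtain f where f: "f \<in> Bs" "rootrel x f" by blast
    have "x \<in> II j \<or> (\<exists>y\<in>II j. x = sc j y)" using x Isucc by blast
    thus "x \<in> ?S \<union> sc j ` ?S"
    proof
      assume "\<exists>y\<in>II j. x = sc j y"
      then obtain y where y: "y \<in> II j" "x = sc j y" by blast
      hence "rootrel y f" using rootrel_sc f(2) by blast
      thus ?thesis using y f(1) by blast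
    qed (use f in blast)
  qed
  hence 1: "|{x\<in>II (ksucc r j). \<exists>f\<in>Bs. rootrel x f}| \<le>o |?S \<union> sc j ` ?S|" using card_of_mono1 by blast
  have 2: "|sc j ` ?S| <o r" using ordLeq_ordLess_trans[OF card_of_image succ] .
  have inf: "\<not> finite (Field r)" using infinite_UNIV_k by simp
  have "|?S \<union> sc j ` ?S| <o r" using card_of_Un_ordLess_infinite_Field[OF inf CO succ 2] .
  then show ?case using ordLeq_ordLess_trans[OF 1] by blast
next
  case (limit d)
  let ?S = "\<lambda>i. {x\<in>II i. \<exists>f\<in>Bs. rootrel x f}"
  have "{x\<in>II d. \<exists>f\<in>Bs. rootrel x f} \<subseteq> (\<Union>i\<in>underS r d. ?S i)"
  proof
    fix x assume x: "x \<in> {x\<in>II d. \<exists>f\<in>Bs. rootrel x f}"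
    then obtain i where "ordlt r i d" "x \<in> II i" using Ilim limit(1) by blast
    moreover have "i \<in> underS r d" using \<open>ordlt r i d\<close> unfolding underS_def ordlt_def by blast
    ultimately show "x \<in> (\<Union>i\<in>underS r d. ?S i)" using x by blast
  qed
  hence 1: "|{x\<in>II d. \<exists>f\<in>Bs. rootrel x f}| \<le>o |\<Union>i\<in>underS r d. ?S i|" using card_of_mono1 by blast
  have U: "|underS r d| <o r" using card_of_underS[OF CO] by simp
  have IHs: "|?S i| <o r" if "i \<in> underS r d" for i
  proof -
    have "ordlt r i d" using that unfolding underS_def ordlt_def by blast
    thus "|?S i| <o r" using limit(2) by blast
  qed
  have ST: "stable r" using regularCard_stable[OF CO _ regular] infinite_UNIV_k by simp
  have "|SIGMA i : underS r d. ?S i| <o r"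
    by (rule stable_elim[OF ST U]) (rule IHs)
  hence "|\<Union>i\<in>underS r d. ?S i| <o r" using ordLeq_ordLess_trans[OF card_of_UNION_Sigma] by blast
  then show ?case using ordLeq_ordLess_trans[OF 1] by blast
qed

lemma D_small: "|DD b| <o r"
proof -
  have "DD b \<subseteq> {x\<in>II b. \<exists>f\<in>base_d b. rootrel x f}" unfolding DD_def by blast
  hence "|DD b| \<le>o |{x\<in>II b. \<exists>f\<in>base_d b. rootrel x f}|" using card_of_mono1 by blast
  thus ?thesis using ordLeq_ordLess_trans S_small[OF base_d_small] by blast
qed

lemma nosplit_D: assumes d: "isLimit r d" and a: "a \<in> AA"
  shows "\<exists>b. ordlt r b d \<and> \<not> bs_splits lt a (DD d) (DD b)"
proof -
  obtain f where f: "rootrel a f" using root_ex a by blast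
  have fb: "f \<in> base_set r" using rootrel_base f .
  show ?thesis
  proof (cases "a \<in> DD d")
    case True
    then obtain b where b: "ordlt r b d" "a \<in> DD b" using D_cont[OF d] by blast
    have "\<not> bs_splits lt a (DD d) (DD b)" using nosplit_mem[OF b(2)] .
    thus ?thesis using b(1) by blast
  next
    case aD: False
    show ?thesis
    proof (cases "f \<in> base_d d")
      case True
      hence "a \<notin> II d" using aD f unfolding DD_def by blast
      then obtain p where p: "p \<in> II d" "rootrel p f" "lt a p" "\<forall>b\<in>II d. b \<noteq> p \<longrightarrow> (lt b a \<longleftrightarrow> lt b p)"
        using proj[OF f] by blast
      have pD: "p \<in> DD d" using p True unfolding DD_def by blast
      have pA: "p \<in> AA" using p(1) by blast
      obtain b where b: "ordlt r b d" "p \<in> DD b" using D_cont[OF d pD] by blast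
      have "\<not> bs_splits lt a (DD d) (DD b)"
      proof (rule nosplit_R[OF lin a D_sub D_sub aD])
        show "\<forall>b'\<in>DD d. lt a b' \<longrightarrow> (\<exists>c\<in>DD b. lt a c \<and> (lt c b' \<or> c = b'))"
        proof (intro ballI impI)
          fix b' assume b': "b' \<in> DD d" "lt a b'"
          have b'I: "b' \<in> II d" using b'(1) unfolding DD_def by blast
          have b'A: "b' \<in> AA" using b'I by blast
          show "\<exists>c\<in>DD b. lt a c \<and> (lt c b' \<or> c = b')"
          proof (cases "b' = p")
            case True thus ?thesis using b(2) p(3) by blast
          next
            case False
            have "\<not> lt b' a" using asymA[OF a b'A b'(2)] .
            hence "\<not> lt b' p" using p(4) b'I False by blast
            hence "lt p b'" using totA[OF pA b'A] False by blast
            thus ?thesis using b(2) p(3) by blast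
          qed
        qed
      qed
      thus ?thesis using b(1) by blast
    next
      case False
      obtain b where b: "ordlt r b d" and
        gap: "\<forall>g\<in>base_d d. base_lt r f g \<longrightarrow> (\<exists>\<mu>\<in>base_d b. base_lt r f \<mu> \<and> base_lt r \<mu> g)"
        using base_gap[OF fb False d] by blast
      have "\<not> bs_splits lt a (DD d) (DD b)"
      proof (rule nosplit_R[OF lin a D_sub D_sub aD])
        show "\<forall>b'\<in>DD d. lt a b' \<longrightarrow> (\<exists>c\<in>DD b. lt a c \<and> (lt c b' \<or> c = b'))"
        proof (intro ballI impI)
          fix b' assume b': "b' \<in> DD d" "lt a b'"
          obtain g where g: "g \<in> base_d d" "rootrel b' g" "b' \<in> II d" using b'(1) unfolding DD_def by blast
          have b'A: "b' \<in> AA" using g(3) by blast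
          have "g \<noteq> f" using g(1) False by blast
          have "base_lt r f g"
          proof (rule ccontr)
            assume "\<not> base_lt r f g"
            hence "base_lt r g f" using base_tri \<open>g \<noteq> f\<close> by blast
            hence "lt b' a" using InvA[OF b'A a g(2) f] by blast
            thus False using asymA[OF a b'A b'(2)] by blast
          qed
          then obtain \<mu> where \<mu>: "\<mu> \<in> base_d b" "base_lt r f \<mu>" "base_lt r \<mu> g" using gap g(1) by blast
          have \<mu>b: "\<mu> \<in> base_set r" using \<mu>(1) unfolding base_d_def by blast
          have cD: "emb \<mu> \<in> DD b" unfolding DD_def using emb_in[OF \<mu>b] \<mu>(1) rbase[OF \<mu>b] by blast
          have cA: "emb \<mu> \<in> AA" using emb_in[OF \<mu>b] by blast
          have "lt a (emb \<mu>)" using InvA[OF a cA f rbase[OF \<mu>b] \<mu>(2)] .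
          moreover have "lt (emb \<mu>) b'" using InvA[OF cA b'A rbase[OF \<mu>b] g(2) \<mu>(3)] .
          ultimately show "\<exists>c\<in>DD b. lt a c \<and> (lt c b' \<or> c = b')" using cD by blast
        qed
      qed
      thus ?thesis using b by blast
    qed
  qed
qed

lemma nice_main: "nice r lt AA"
  unfolding nice_def
proof (intro allI impI)
  fix As assume rep: "kappa_rep r AA As"
  have Amono: "\<And>i j. (i, j) \<in> r \<Longrightarrow> As i \<subseteq> As j" using rep unfolding kappa_rep_def by blast
  have Alim: "\<And>d. isLimit r d \<Longrightarrow> As d = (\<Union>\<beta>\<in>{\<beta>. ordlt r \<beta> d}. As \<beta>)"
    using rep unfolding kappa_rep_def by blast
  have Asmall: "\<And>a. |As a| <o r" using rep unfolding kappa_rep_def by blast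
  have Aun: "(\<Union>a. As a) = AA" using rep unfolding kappa_rep_def by blast
  have fa_ex: "\<exists>g. DD b \<subseteq> As g" for b
  proof (rule cover[OF Amono])
    show "DD b \<subseteq> (\<Union>i. As i)" unfolding Aun by (rule D_sub)
    show "|DD b| <o r" by (rule D_small)
  qed
  have ga_ex: "\<exists>g. As b \<subseteq> DD g" for b
  proof (rule cover[OF D_mono])
    have "As b \<subseteq> AA" using Aun by blast
    thus "As b \<subseteq> (\<Union>i. DD i)" using D_cover by blast
    show "|As b| <o r" by (rule Asmall)
  qed
  define fa where "fa b = (SOME g. DD b \<subseteq> As g)" for b
  define ga where "ga b = (SOME g. As b \<subseteq> DD g)" for b
  have fa: "\<And>b. DD b \<subseteq> As (fa b)" unfolding fa_def by (rule someI_ex[OF fa_ex])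
  have ga: "\<And>b. As b \<subseteq> DD (ga b)" unfolding ga_def by (rule someI_ex[OF ga_ex])
  define C where "C = {d. \<forall>b. ordlt r b d \<longrightarrow> ordlt r (fa b) d \<and> ordlt r (ga b) d}"
  have hex: "\<exists>c. ordlt r g c \<and> (\<forall>b. (b, g) \<in> r \<longrightarrow> ordlt r (fa b) c \<and> ordlt r (ga b) c)" for g
  proof -
    let ?U = "{b. (b, g) \<in> r}"
    have inf: "\<not> finite (Field r)" using infinite_UNIV_k by simp
    have 1: "|fa ` ?U| <o r" using ordLeq_ordLess_trans[OF card_of_image under_small] .
    have 2: "|ga ` ?U| <o r" using ordLeq_ordLess_trans[OF card_of_image under_small] .
    have 3: "|{g}| <o r" by (rule finite_small) simp
    have 4: "|fa ` ?U \<union> ga ` ?U| <o r" using card_of_Un_ordLess_infinite_Field[OF inf CO 1 2] .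
    have "|{g} \<union> (fa ` ?U \<union> ga ` ?U)| <o r" using card_of_Un_ordLess_infinite_Field[OF inf CO 3 4] .
    then obtain c where c: "\<forall>k\<in>{g} \<union> (fa ` ?U \<union> ga ` ?U). ordlt r k c" using sbounded by blast
    have "ordlt r g c" using c by simp
    moreover have "\<forall>b. (b, g) \<in> r \<longrightarrow> ordlt r (fa b) c \<and> ordlt r (ga b) c"
    proof (intro allI impI)
      fix b assume "(b, g) \<in> r"
      hence "fa b \<in> {g} \<union> (fa ` ?U \<union> ga ` ?U)" "ga b \<in> {g} \<union> (fa ` ?U \<union> ga ` ?U)" by auto
      thus "ordlt r (fa b) c \<and> ordlt r (ga b) c" using c by blast
    qed
    ultimately show ?thesis by blast
  qed
  define h where "h g = (SOME c. ordlt r g c \<and> (\<forall>b. (b, g) \<in> r \<longrightarrow> ordlt r (fa b) c \<and> ordlt r (ga b) c))" for g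
  have hh: "ordlt r g (h g) \<and> (\<forall>b. (b, g) \<in> r \<longrightarrow> ordlt r (fa b) (h g) \<and> ordlt r (ga b) (h g))" for g
    unfolding h_def by (rule someI_ex[OF hex])
  have h: "\<And>g. ordlt r g (h g)" "\<And>g b. (b, g) \<in> r \<Longrightarrow> ordlt r (fa b) (h g) \<and> ordlt r (ga b) (h g)"
    using hh by blast+
  have club: "club r C" unfolding club_def
  proof (intro conjI allI impI)
    fix \<alpha>
    define s where "s n = (h ^^ Suc n) \<alpha>" for n
    have sS: "s (Suc n) = h (s n)" for n unfolding s_def by simp
    have s0: "s 0 = h \<alpha>" unfolding s_def by simp
    have 2: "|UNIV :: nat set| <o r" using ordIso_ordLess_trans[OF card_of_nat uncountable] .
    have "|range s| <o r" using ordLeq_ordLess_trans[OF card_of_image 2] .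
    then obtain ub where ub: "\<forall>k\<in>range s. (k, ub) \<in> r" using bounded by blast
    have ubS: "ub \<in> {u. \<forall>n. (s n, u) \<in> r}" using ub by simp
    obtain \<delta> where \<delta>: "\<delta> \<in> {u. \<forall>n. (s n, u) \<in> r}" "\<forall>y\<in>{u. \<forall>n. (s n, u) \<in> r}. (\<delta>, y) \<in> r"
      using exists_min[OF ubS] by blast
    have "\<delta> \<in> C" unfolding C_def
    proof (intro CollectI allI impI)
      fix b assume b: "ordlt r b \<delta>"
      have "\<exists>n. ordlt r b (s n)"
      proof (rule ccontr)
        assume "\<not> ?thesis"
        hence "\<forall>n. (s n, b) \<in> r" using not_lt by blast
        hence "b \<in> {u. \<forall>n. (s n, u) \<in> r}" by simp
        hence "(\<delta>, b) \<in> r" using \<delta>(2) by blast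
        thus False using b not_lt by blast
      qed
      then obtain n where "ordlt r b (s n)" by blast
      hence "(b, s n) \<in> r" by (rule lt_imp_le)
      hence "ordlt r (fa b) (h (s n)) \<and> ordlt r (ga b) (h (s n))" by (rule h(2))
      hence "ordlt r (fa b) (s (Suc n)) \<and> ordlt r (ga b) (s (Suc n))" unfolding sS .
      moreover have "(s (Suc n), \<delta>) \<in> r" using \<delta>(1) by blast
      ultimately show "ordlt r (fa b) \<delta> \<and> ordlt r (ga b) \<delta>" using lt_le_trans by blast
    qed
    moreover have "(s 0, \<delta>) \<in> r" using \<delta>(1) by blast
    hence "ordlt r \<alpha> \<delta>" using lt_le_trans[OF h(1)[of \<alpha>]] unfolding s0 by blast
    ultimately show "\<exists>\<gamma>\<in>C. ordlt r \<alpha> \<gamma>" by blast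
  next
    fix \<delta> assume a: "isLimit r \<delta> \<and> (\<forall>\<beta>. ordlt r \<beta> \<delta> \<longrightarrow> (\<exists>\<gamma>\<in>C. ordlt r \<beta> \<gamma> \<and> ordlt r \<gamma> \<delta>))"
    show "\<delta> \<in> C" unfolding C_def
    proof (intro CollectI allI impI)
      fix b assume "ordlt r b \<delta>"
      then obtain \<gamma> where g: "\<gamma> \<in> C" "ordlt r b \<gamma>" "ordlt r \<gamma> \<delta>" using a by blast
      hence "ordlt r (fa b) \<gamma> \<and> ordlt r (ga b) \<gamma>" unfolding C_def by blast
      thus "ordlt r (fa b) \<delta> \<and> ordlt r (ga b) \<delta>" using g(3) lt_trans by blast
    qed
  qed
  have disj: "Sp_bs r lt AA As \<inter> C = {}"
  proof (rule ccontr)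
    assume "Sp_bs r lt AA As \<inter> C \<noteq> {}"
    then obtain d where dS: "d \<in> Sp_bs r lt AA As" and dC: "d \<in> C" by blast
    from dS obtain a where lim: "isLimit r d" and a: "a \<in> AA"
      and sp: "\<forall>\<beta>. ordlt r \<beta> d \<longrightarrow> bs_splits lt a (As d) (As \<beta>)"
      unfolding Sp_bs_def by blast
    have Cd: "\<And>b. ordlt r b d \<Longrightarrow> ordlt r (fa b) d \<and> ordlt r (ga b) d" using dC unfolding C_def by blast
    have eq: "As d = DD d"
    proof
      show "As d \<subseteq> DD d"
      proof
        fix x assume "x \<in> As d"
        then obtain \<beta> where \<beta>: "ordlt r \<beta> d" "x \<in> As \<beta>" using Alim[OF lim] by blast
        hence "x \<in> DD (ga \<beta>)" using ga by blast
        moreover have "DD (ga \<beta>) \<subseteq> DD d" using D_mono lt_imp_le Cd \<beta>(1) by blast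
        ultimately show "x \<in> DD d" by blast
      qed
    next
      show "DD d \<subseteq> As d"
      proof
        fix x assume "x \<in> DD d"
        then obtain b where b: "ordlt r b d" "x \<in> DD b" using D_cont[OF lim] by blast
        hence "x \<in> As (fa b)" using fa by blast
        moreover have "As (fa b) \<subseteq> As d" using Amono lt_imp_le Cd b(1) by blast
        ultimately show "x \<in> As d" by blast
      qed
    qed
    obtain b where b: "ordlt r b d" "\<not> bs_splits lt a (DD d) (DD b)" using nosplit_D[OF lim a] by blast
    have "ordlt r (fa b) d" using Cd[OF b(1)] by blast
    hence "bs_splits lt a (As d) (As (fa b))" using sp by blast
    hence "bs_splits lt a (As d) (DD b)" by (rule split_mono) (rule fa)
    hence "bs_splits lt a (DD d) (DD b)" unfolding eq .
    thus False using b(2) by contradiction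
  qed
  show "\<not> stationary r (Sp_bs r lt AA As)"
  proof
    assume "stationary r (Sp_bs r lt AA As)"
    hence "Sp_bs r lt AA As \<inter> C \<noteq> {}" using club unfolding stationary_def by blast
    thus False using disj by contradiction
  qed
qed

end

theorem mainTheorem13:
  fixes r :: "'k rel"
    and lt :: "'a \<Rightarrow> 'a \<Rightarrow> bool"
    and II :: "'k \<Rightarrow> 'a set"
    and emb :: "(nat \<Rightarrow> 'k \<times> rat) \<Rightarrow> 'a"
    and sc :: "'k \<Rightarrow> 'a \<Rightarrow> 'a"
  assumes card: "card_order r"
    and regular: "regularCard r"
    and uncountable: "natLeq <o r"
    and kappa_lt_kappa: "\<forall>X :: 'k set. |X| <o r \<longrightarrow> |Func X (UNIV :: 'k set)| \<le>o r"
    and gamma_omega: "\<forall>X :: 'k set. |X| <o r \<longrightarrow> |Func (UNIV :: nat set) X| <o r"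
    \<comment> \<open>I^0 is a copy of the base order\<close>
    and I0: "II (kzero r) = emb ` base_set r"
    and emb_inj: "inj_on emb (base_set r)"
    and emb_ord: "\<forall>f\<in>base_set r. \<forall>g\<in>base_set r. lt (emb f) (emb g) \<longleftrightarrow> base_lt r f g"
    \<comment> \<open>successor steps: sc i \<nu> is the new element \<nu>^(i+1)\<close>
    and Isucc: "\<forall>i. II (ksucc r i) = II i \<union> sc i ` II i"
    and sc_new: "\<forall>i. \<forall>\<nu>\<in>II i. sc i \<nu> \<notin> II i"
    and sc_inj: "\<forall>i. inj_on (sc i) (II i)"
    and sc_below: "\<forall>i. \<forall>\<nu>\<in>II i. lt (sc i \<nu>) \<nu>"
    and sc_cut: "\<forall>i. \<forall>\<nu>\<in>II i. \<forall>\<tau>\<in>II i - {\<nu>}. lt \<tau> (sc i \<nu>) \<longleftrightarrow> lt \<tau> \<nu>"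
    and sc_ord: "\<forall>i. \<forall>\<nu>\<in>II i. \<forall>\<mu>\<in>II i. \<nu> \<noteq> \<mu> \<longrightarrow> (lt (sc i \<nu>) (sc i \<mu>) \<longleftrightarrow> lt \<nu> \<mu>)"
    \<comment> \<open>unions at limits\<close>
    and Ilim: "\<forall>\<delta>. isLimit r \<delta> \<longrightarrow> II \<delta> = (\<Union>i\<in>{i. ordlt r i \<delta>}. II i)"
    \<comment> \<open>lt is a linear order on I\<close>
    and lin: "\<forall>x\<in>(\<Union>i. II i). \<forall>y\<in>(\<Union>i. II i). \<forall>z\<in>(\<Union>i. II i).
               \<not> lt x x \<and> (lt x y \<and> lt y z \<longrightarrow> lt x z) \<and> (lt x y \<or> x = y \<or> lt y x)"
  shows "nice r lt (\<Union>i. II i)"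
proof -
  interpret setting r lt II emb sc
    by unfold_locales (fact card regular uncountable gamma_omega I0 emb_inj emb_ord Isucc sc_new
        sc_inj sc_below sc_cut sc_ord Ilim lin)+
  show ?thesis by (rule nice_main)
qed

end
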